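(* Let $X$ be a complete nonsingular toric variety which is Fano and all of whose toric subvarieties are Fano. Let $\widehat D$ be an exceptional divisor, with primitive relation $\rho_1+\cdots+\rho_k=\widehat\rho$. Then there exists a morphism of nonsingular toric varieties $X\to X'$ such that $\sigma:=\langle\rho_1,\ldots,\rho_k\rangle$ is a cone of the fan $\Delta'$ of $X'$ and $X\to X'$ is the blowing up of $X'$ along the toric subvariety $X'(\sigma)$.
   Context: $X$ has fan $\Delta$ in $N_{\mathbb R}$; each toric divisor $D$ corresponds to a ray generator $\rho$. A primitive set is a set $\{D_1,\ldots,D_k\}$ of toric divisors with empty intersection whose proper subsets all have nonempty intersection; for such $X$ its primitive relation is either $\rho_1+\cdots+\rho_k=0$ or $\rho_1+\cdots+\rho_k=\widehat\rho$ for a ray generator $\widehat\rho$. The toric divisor $\widehat D$ of $\widehat\rho$ is then called exceptional. For a cone $\sigma$ of a fan $\Delta'$, $X'(\sigma)$ is the corresponding torus-orbit closure. *)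

theory Defs
  imports "HOL-Analysis.Analysis"
begin

text \<open>Toric varieties are encoded by their fans in N_R = real^'n with lattice N = integer
vectors. A nonsingular fan is simplicial, so each cone is recorded by the finite set of
its primitive ray generators.\<close>

definition lattice_vec :: "real^'n \<Rightarrow> bool" where
  "lattice_vec v \<longleftrightarrow> (\<forall>i. v$i \<in> \<int>)"

definition lattice_basis :: "(real^'n) set \<Rightarrow> bool" where
  "lattice_basis B \<longleftrightarrow> finite B \<and> card B = CARD('n) \<and> (\<forall>b\<in>B. lattice_vec b) \<and>
     (\<forall>v. lattice_vec v \<longrightarrow> (\<exists>c. (\<forall>b\<in>B. c b \<in> \<int>) \<and> v = (\<Sum>b\<in>B. c b *\<^sub>R b)))"

definition pos_hull :: "(real^'n) set \<Rightarrow> (real^'n) set" where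
  "pos_hull S = {\<Sum>s\<in>S. c s *\<^sub>R s | c. \<forall>s\<in>S. 0 \<le> c s}"

definition nonsingular_fan :: "(real^'n) set set \<Rightarrow> bool" where
  "nonsingular_fan \<Delta> \<longleftrightarrow> finite \<Delta> \<and> {} \<in> \<Delta> \<and>
     (\<forall>S\<in>\<Delta>. \<forall>T. T \<subseteq> S \<longrightarrow> T \<in> \<Delta>) \<and>
     (\<forall>S\<in>\<Delta>. \<exists>B. lattice_basis B \<and> S \<subseteq> B) \<and>
     (\<forall>S\<in>\<Delta>. \<forall>T\<in>\<Delta>. pos_hull S \<inter> pos_hull T = pos_hull (S \<inter> T))"

definition complete_fan :: "(real^'n) set set \<Rightarrow> bool" where
  "complete_fan \<Delta> \<longleftrightarrow> \<Union>(pos_hull ` \<Delta>) = UNIV"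

definition rays :: "(real^'n) set set \<Rightarrow> (real^'n) set" where
  "rays \<Delta> = {r. {r} \<in> \<Delta>}"

definition maximal_cone :: "(real^'n) set set \<Rightarrow> (real^'n) set \<Rightarrow> bool" where
  "maximal_cone \<Delta> \<sigma> \<longleftrightarrow> \<sigma> \<in> \<Delta> \<and> (\<forall>\<tau>\<in>\<Delta>. \<sigma> \<subseteq> \<tau> \<longrightarrow> \<tau> = \<sigma>)"

text \<open>The orbit closure X(tau) has fan Star(tau) projected to N_R / span tau; its rays are the
images of rays r with tau \<union> {r} a cone, r \<notin> tau, and linear functions on the quotient are
functionals u vanishing on tau. X(tau) is Fano iff the anticanonical support function of
this quotient fan is strictly convex: for every maximal cone sigma \<supseteq> tau there is u with
u = 0 on tau, u = 1 on the rays of sigma - tau, and u < 1 on all other rays of the star.\<close>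
definition fano_orbit_closure :: "(real^'n) set set \<Rightarrow> (real^'n) set \<Rightarrow> bool" where
  "fano_orbit_closure \<Delta> \<tau> \<longleftrightarrow>
     (\<forall>\<sigma>. maximal_cone \<Delta> \<sigma> \<and> \<tau> \<subseteq> \<sigma> \<longrightarrow>
        (\<exists>u::real^'n. (\<forall>r\<in>\<tau>. inner u r = 0) \<and> (\<forall>r\<in>\<sigma> - \<tau>. inner u r = 1) \<and>
           (\<forall>r. r \<in> rays \<Delta> \<and> r \<notin> \<sigma> \<and> insert r \<tau> \<in> \<Delta> \<longrightarrow> inner u r < 1)))"

definition fano :: "(real^'n) set set \<Rightarrow> bool" where
  "fano \<Delta> \<longleftrightarrow> fano_orbit_closure \<Delta> {}"

definition all_toric_subvarieties_fano :: "(real^'n) set set \<Rightarrow> bool" where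
  "all_toric_subvarieties_fano \<Delta> \<longleftrightarrow> (\<forall>\<tau>\<in>\<Delta>. fano_orbit_closure \<Delta> \<tau>)"

text \<open>Primitive set: divisors D_r (r \<in> P) with empty intersection (P not a cone) whose proper
subsets all have nonempty intersection (are cones).\<close>
definition primitive_collection :: "(real^'n) set set \<Rightarrow> (real^'n) set \<Rightarrow> bool" where
  "primitive_collection \<Delta> P \<longleftrightarrow> P \<subseteq> rays \<Delta> \<and> P \<notin> \<Delta> \<and> (\<forall>Q. Q \<subset> P \<longrightarrow> Q \<in> \<Delta>)"

text \<open>Star subdivision of Delta' at the cone sigma (fan of the blow-up of X' along X'(sigma)),
with new ray the sum of the generators of sigma.\<close>
definition star_subdivision :: "(real^'n) set set \<Rightarrow> (real^'n) set \<Rightarrow> (real^'n) set set" where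
  "star_subdivision \<Delta>' \<sigma> =
     {\<tau>\<in>\<Delta>'. \<not> \<sigma> \<subseteq> \<tau>} \<union>
     {insert (\<Sum>\<sigma>) \<tau> | \<tau>. \<tau> \<in> \<Delta>' \<and> \<not> \<sigma> \<subseteq> \<tau> \<and> \<tau> \<union> \<sigma> \<in> \<Delta>'}"

end

theory Submission
  imports Defs
begin

lemma sum_in_cc:
  assumes "finite A" "convex_cone K" "\<And>s. s\<in>A \<Longrightarrow> f s \<in> K"
  shows "sum f A \<in> K"
  using assms by (induction A rule: finite_induct) (auto simp: convex_cone_contains_0 convex_cone_add)

lemma in_pos_hull: "finite S \<Longrightarrow> s \<in> S \<Longrightarrow> s \<in> pos_hull S"
  unfolding pos_hull_def
proof (rule CollectI, rule exI[of _ "\<lambda>t. if t = s then 1 else 0"])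
  assume "finite S" "s \<in> S"
  have "\<And>t. (if t = s then 1 else 0) *\<^sub>R t = (if t = s then s else 0)" by simp
  then show "s = (\<Sum>t\<in>S. (if t = s then 1 else 0) *\<^sub>R t) \<and> (\<forall>t\<in>S. 0 \<le> (if t = s then 1 else (0::real)))"
    using \<open>finite S\<close> \<open>s \<in> S\<close> by (simp add: sum.delta')
qed

lemma convex_cone_pos_hull: "convex_cone (pos_hull S)"
  unfolding convex_cone_iff pos_hull_def
proof (intro conjI ballI allI impI)
  show "0 \<in> {\<Sum>s\<in>S. c s *\<^sub>R s |c. \<forall>s\<in>S. 0 \<le> c s}"
    by (rule CollectI, rule exI[of _ "\<lambda>_. 0"]) auto
next
  fix x y assume "x \<in> {\<Sum>s\<in>S. c s *\<^sub>R s |c. \<forall>s\<in>S. 0 \<le> c s}" "y \<in> {\<Sum>s\<in>S. c s *\<^sub>R s |c. \<forall>s\<in>S. 0 \<le> c s}"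
  then obtain c d where "x = (\<Sum>s\<in>S. c s *\<^sub>R s)" "\<forall>s\<in>S. 0 \<le> c s" "y = (\<Sum>s\<in>S. d s *\<^sub>R s)" "\<forall>s\<in>S. 0 \<le> d s"
    by auto
  then show "x + y \<in> {\<Sum>s\<in>S. c s *\<^sub>R s |c. \<forall>s\<in>S. 0 \<le> c s}"
    by (intro CollectI exI[of _ "\<lambda>s. c s + d s"]) (auto simp: scaleR_add_left sum.distrib)
next
  fix x and a :: real assume "x \<in> {\<Sum>s\<in>S. c s *\<^sub>R s |c. \<forall>s\<in>S. 0 \<le> c s}" "0 \<le> a"
  then obtain c where "x = (\<Sum>s\<in>S. c s *\<^sub>R s)" "\<forall>s\<in>S. 0 \<le> c s" by auto
  then show "a *\<^sub>R x \<in> {\<Sum>s\<in>S. c s *\<^sub>R s |c. \<forall>s\<in>S. 0 \<le> c s}"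
    using \<open>0 \<le> a\<close> by (intro CollectI exI[of _ "\<lambda>s. a * c s"]) (auto simp: scaleR_sum_right)
qed

lemma pos_hull_cc: assumes "finite S" shows "pos_hull S = convex_cone hull S"
proof
  show "pos_hull S \<subseteq> convex_cone hull S"
  proof
    fix x assume "x \<in> pos_hull S"
    then obtain c where x: "x = (\<Sum>s\<in>S. c s *\<^sub>R s)" "\<forall>s\<in>S. 0 \<le> c s" unfolding pos_hull_def by auto
    show "x \<in> convex_cone hull S" unfolding x(1)
      by (rule sum_in_cc[OF assms convex_cone_convex_cone_hull])
         (simp add: x(2) convex_cone_hull_mul hull_inc)
  qed
  show "convex_cone hull S \<subseteq> pos_hull S"
    by (rule hull_minimal) (auto simp: in_pos_hull assms convex_cone_pos_hull)
qed

lemma closed_pos_hull: "finite S \<Longrightarrow> closed (pos_hull (S :: (real^'n) set))"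
  by (simp add: pos_hull_cc closed_convex_cone_hull)

lemma pos_hull_mono: assumes "finite S" "A \<subseteq> S" shows "pos_hull A \<subseteq> pos_hull S"
proof -
  have "finite A" using assms finite_subset by blast
  then have "pos_hull A = convex_cone hull A" by (rule pos_hull_cc)
  also have "\<dots> \<subseteq> convex_cone hull S" by (rule hull_mono[OF assms(2)])
  finally show ?thesis using pos_hull_cc[OF assms(1)] by simp
qed

lemma pos_hull_insert_absorb:
  assumes "finite A" "r \<in> pos_hull A" shows "pos_hull (insert r A) \<subseteq> pos_hull A"
proof -
  have "pos_hull (insert r A) = convex_cone hull (insert r A)" using assms by (simp add: pos_hull_cc)
  also have "\<dots> \<subseteq> pos_hull A"
    by (rule hull_minimal) (use assms in \<open>auto simp: in_pos_hull convex_cone_pos_hull\<close>)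
  finally show ?thesis .
qed

lemma sum_in_pos_hull: "finite S \<Longrightarrow> A \<subseteq> S \<Longrightarrow> \<Sum>A \<in> pos_hull S"
proof -
  assume "finite S" "A \<subseteq> S"
  then have "finite A" by (rule rev_finite_subset)
  have "\<Sum>A \<in> convex_cone hull A"
    by (rule sum_in_cc[OF \<open>finite A\<close> convex_cone_convex_cone_hull]) (simp add: hull_inc)
  then show ?thesis using pos_hull_mono[OF \<open>finite S\<close> \<open>A \<subseteq> S\<close>] pos_hull_cc[OF \<open>finite A\<close>] by auto
qed

lemma lattice_basis_span: assumes "lattice_basis (B :: (real^'n) set)"
  shows "independent B" "span B = UNIV" "finite B" "card B = CARD('n)"
proof -
  show fin: "finite B" "card B = CARD('n)" using assms unfolding lattice_basis_def by auto
  have "Basis \<subseteq> span B"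
  proof
    fix b :: "real^'n" assume "b \<in> Basis"
    then obtain i where b: "b = axis i 1" by (auto simp: Basis_vec_def)
    have "lattice_vec b" unfolding lattice_vec_def b axis_def by auto
    then obtain c where "b = (\<Sum>x\<in>B. c x *\<^sub>R x)" using assms unfolding lattice_basis_def by blast
    then show "b \<in> span B" by (simp add: span_sum span_mul span_base)
  qed
  then have "span Basis \<subseteq> span B" by (rule span_minimal) (rule subspace_span)
  then show sp: "span B = UNIV" by (simp add: top_le)
  show "independent B"
    using card_eq_dim[of B UNIV] fin sp by simp
qed

lemma sum_extend:
  assumes "finite B" "A \<subseteq> B"
  shows "(\<Sum>a\<in>A. c a *\<^sub>R a) = (\<Sum>a\<in>B. (if a \<in> A then c a else 0) *\<^sub>R (a::'a::real_vector))"
proof -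
  have "(\<Sum>a\<in>B. (if a \<in> A then c a else 0) *\<^sub>R a) = (\<Sum>a\<in>B. if a \<in> A then c a *\<^sub>R a else 0)"
    by (rule sum.cong) auto
  also have "\<dots> = (\<Sum>a\<in>B \<inter> A. c a *\<^sub>R a)" by (rule sum.inter_restrict[symmetric]) fact
  also have "B \<inter> A = A" using assms by auto
  finally show ?thesis by simp
qed

lemma coord_unique:
  assumes "independent (B::'a::euclidean_space set)" "A1 \<subseteq> B" "A2 \<subseteq> B"
    "(\<Sum>a\<in>A1. c a *\<^sub>R a) = (\<Sum>a\<in>A2. d a *\<^sub>R a)" "x \<in> B"
  shows "(if x \<in> A1 then c x else 0) = (if x \<in> A2 then d x else 0)"
proof -
  have fin: "finite B" using assms(1) by (simp add: independent_explicit)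
  have "(\<Sum>a\<in>B. (if a \<in> A1 then c a else 0) *\<^sub>R a) = (\<Sum>a\<in>B. (if a \<in> A2 then d a else 0) *\<^sub>R a)"
    using sum_extend[OF fin assms(2), of c] sum_extend[OF fin assms(3), of d] assms(4) by simp
  then have "(\<Sum>a\<in>B. ((if a \<in> A1 then c a else 0) - (if a \<in> A2 then d a else 0)) *\<^sub>R a) = 0"
    by (simp add: scaleR_diff_left sum_subtractf)
  then have "\<forall>v\<in>B. (if v \<in> A1 then c v else 0) - (if v \<in> A2 then d v else 0) = 0"
    using assms(1) unfolding independent_explicit
    by (elim conjE allE[of _ "\<lambda>v. (if v \<in> A1 then c v else 0) - (if v \<in> A2 then d v else 0)"]) blast
  then show ?thesis using assms(5) by auto
qed

lemma fan_basis: "nonsingular_fan \<Delta> \<Longrightarrow> S \<in> \<Delta> \<Longrightarrow> \<exists>B. lattice_basis B \<and> S \<subseteq> B"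
  unfolding nonsingular_fan_def by blast

lemma fan_face: "nonsingular_fan \<Delta> \<Longrightarrow> S \<in> \<Delta> \<Longrightarrow> T \<subseteq> S \<Longrightarrow> T \<in> \<Delta>"
  unfolding nonsingular_fan_def by blast

lemma fan_inter: "nonsingular_fan \<Delta> \<Longrightarrow> S \<in> \<Delta> \<Longrightarrow> T \<in> \<Delta> \<Longrightarrow> pos_hull S \<inter> pos_hull T = pos_hull (S \<inter> T)"
  unfolding nonsingular_fan_def by blast

lemma fan_finite: "nonsingular_fan \<Delta> \<Longrightarrow> finite \<Delta>"
  unfolding nonsingular_fan_def by blast

lemma fan_empty: "nonsingular_fan \<Delta> \<Longrightarrow> {} \<in> \<Delta>"
  unfolding nonsingular_fan_def by blast

lemma cone_fin_indep:
  assumes "nonsingular_fan (\<Delta> :: (real^'n) set set)" "S \<in> \<Delta>"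
  shows "finite S" "independent S"
proof -
  obtain B where "lattice_basis B" "S \<subseteq> B" using fan_basis[OF assms] by blast
  then show "finite S" "independent S" using lattice_basis_span[of B] 
    by (auto intro: finite_subset dest: independent_mono)
qed

lemma relint_T1:
  assumes "nonsingular_fan (\<Delta> :: (real^'n) set set)" "C \<in> \<Delta>" "T \<in> \<Delta>" "\<Sum>C \<in> pos_hull T"
  shows "C \<subseteq> T"
proof
  fix x assume x: "x \<in> C"
  have fC: "finite C" and iC: "independent C" using cone_fin_indep[OF assms(1,2)] by auto
  have "\<Sum>C \<in> pos_hull C" using sum_in_pos_hull[OF fC] by simp
  then have "\<Sum>C \<in> pos_hull (C \<inter> T)" using fan_inter[OF assms(1-3)] assms(4) by auto
  then obtain d where d: "\<Sum>C = (\<Sum>s\<in>C \<inter> T. d s *\<^sub>R s)" unfolding pos_hull_def by auto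
  have "(\<Sum>s\<in>C. 1 *\<^sub>R s) = (\<Sum>s\<in>C \<inter> T. d s *\<^sub>R s)" using d by simp
  from coord_unique[OF iC subset_refl _ this x] have "(1::real) = (if x \<in> C \<inter> T then d x else 0)"
    using x by simp
  then show "x \<in> T" by (auto split: if_splits)
qed

lemma exists_maximal:
  assumes "nonsingular_fan \<Delta>" "S \<in> \<Delta>" shows "\<exists>M. maximal_cone \<Delta> M \<and> S \<subseteq> M"
  using finite_has_maximal2[OF fan_finite[OF assms(1)] assms(2)] unfolding maximal_cone_def by blast

lemma lemma_CL:
  fixes \<Delta> :: "(real^'n) set set"
  assumes fan: "nonsingular_fan \<Delta>" and comp: "complete_fan \<Delta>" and C: "C \<in> \<Delta>" and M: "M \<in> \<Delta>"
    and h: "\<And>\<epsilon>. \<epsilon> > 0 \<Longrightarrow> \<Sum>C + \<epsilon> *\<^sub>R v \<notin> pos_hull M"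
  shows "\<exists>T\<in>\<Delta>. C \<subseteq> T \<and> \<not> T \<subseteq> M"
proof (rule ccontr)
  assume nc: "\<not> (\<exists>T\<in>\<Delta>. C \<subseteq> T \<and> \<not> T \<subseteq> M)"
  define U where "U = \<Union> (pos_hull ` {T\<in>\<Delta>. \<not> T \<subseteq> M})"
  have "closed U" unfolding U_def
    by (rule closed_Union) (use fan_finite[OF fan] cone_fin_indep[OF fan] closed_pos_hull in auto)
  have "\<Sum>C \<notin> U"
  proof
    assume "\<Sum>C \<in> U"
    then obtain T where "T \<in> \<Delta>" "\<not> T \<subseteq> M" "\<Sum>C \<in> pos_hull T" unfolding U_def by auto
    then show False using relint_T1[OF fan C] nc by blast
  qed
  then obtain e where e: "e > 0" "ball (\<Sum>C) e \<subseteq> - U"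
    using \<open>closed U\<close> open_contains_ball[of "- U"] by (auto simp: closed_def)
  define w where "w = norm v + 1"
  have w: "w > 0" "norm v \<le> w" unfolding w_def using norm_ge_zero[of v] by linarith+
  define \<epsilon> where "\<epsilon> = e / (2 * w)"
  have ep: "\<epsilon> > 0" unfolding \<epsilon>_def using e w by simp
  have "\<epsilon> * norm v < e"
  proof -
    have "\<epsilon> * norm v \<le> \<epsilon> * w" using ep w by simp
    also have "\<epsilon> * w = e / 2" unfolding \<epsilon>_def using w by simp
    finally show ?thesis using e by simp
  qed
  then have "\<Sum>C + \<epsilon> *\<^sub>R v \<in> ball (\<Sum>C) e" using ep by (simp add: dist_norm)
  then have nU: "\<Sum>C + \<epsilon> *\<^sub>R v \<notin> U" using e by auto
  obtain T where T: "T \<in> \<Delta>" "\<Sum>C + \<epsilon> *\<^sub>R v \<in> pos_hull T"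
    using comp unfolding complete_fan_def by blast
  show False
  proof (cases "T \<subseteq> M")
    case True
    then show False using pos_hull_mono[OF cone_fin_indep(1)[OF fan M] True] T h[OF ep] by auto
  next
    case False
    then show False using nU T unfolding U_def by auto
  qed
qed

lemma maximal_lattice_basis:
  fixes \<Delta> :: "(real^'n) set set"
  assumes fan: "nonsingular_fan \<Delta>" and comp: "complete_fan \<Delta>" and M: "maximal_cone \<Delta> M"
  shows "lattice_basis M"
proof -
  have MD: "M \<in> \<Delta>" using M unfolding maximal_cone_def by auto
  obtain B where B: "lattice_basis B" "M \<subseteq> B" using fan_basis[OF fan MD] by blast
  show ?thesis
  proof (cases "M = B")
    case True then show ?thesis using B by simp
  next
    case False
    then obtain b where b: "b \<in> B" "b \<notin> M" using B by auto
    have iB: "independent B" and fB: "finite B" using lattice_basis_span[OF B(1)] by auto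
    have fM: "finite M" using fB B(2) finite_subset by blast
    have "\<exists>T\<in>\<Delta>. M \<subseteq> T \<and> \<not> T \<subseteq> M"
    proof (rule lemma_CL[OF fan comp MD MD])
      fix \<epsilon> :: real assume ep: "\<epsilon> > 0"
      show "\<Sum>M + \<epsilon> *\<^sub>R b \<notin> pos_hull M"
      proof
        assume "\<Sum>M + \<epsilon> *\<^sub>R b \<in> pos_hull M"
        then obtain d where d: "\<Sum>M + \<epsilon> *\<^sub>R b = (\<Sum>s\<in>M. d s *\<^sub>R s)" unfolding pos_hull_def by auto
        have "(\<Sum>s\<in>insert b M. (if s = b then \<epsilon> else 1) *\<^sub>R s) = \<epsilon> *\<^sub>R b + (\<Sum>s\<in>M. (if s = b then \<epsilon> else 1) *\<^sub>R s)"
          using fM b(2) by simp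
        also have "(\<Sum>s\<in>M. (if s = b then \<epsilon> else 1) *\<^sub>R s) = \<Sum>M"
          by (rule sum.cong) (use b(2) in auto)
        finally have "(\<Sum>s\<in>insert b M. (if s = b then \<epsilon> else 1) *\<^sub>R s) = (\<Sum>s\<in>M. d s *\<^sub>R s)"
          using d by (simp add: add.commute)
        from coord_unique[OF iB _ B(2) this b(1)] have "\<epsilon> = 0" using b B(2) by simp
        then show False using ep by simp
      qed
    qed
    then show ?thesis using M unfolding maximal_cone_def by blast
  qed
qed

lemma flip_exists:
  fixes \<Delta> :: "(real^'n) set set"
  assumes fan: "nonsingular_fan \<Delta>" and comp: "complete_fan \<Delta>" and M: "maximal_cone \<Delta> M" and m: "m \<in> M"
  shows "\<exists>M2. maximal_cone \<Delta> M2 \<and> M - {m} \<subseteq> M2 \<and> m \<notin> M2"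
proof -
  have MD: "M \<in> \<Delta>" using M unfolding maximal_cone_def by auto
  have CD: "M - {m} \<in> \<Delta>" using fan_face[OF fan MD] by blast
  have fM: "finite M" and iM: "independent M" using cone_fin_indep[OF fan MD] by auto
  have "\<exists>T\<in>\<Delta>. M - {m} \<subseteq> T \<and> \<not> T \<subseteq> M"
  proof (rule lemma_CL[OF fan comp CD MD, of "- m"])
    fix \<epsilon> :: real assume ep: "\<epsilon> > 0"
    show "\<Sum>(M - {m}) + \<epsilon> *\<^sub>R - m \<notin> pos_hull M"
    proof
      assume "\<Sum>(M - {m}) + \<epsilon> *\<^sub>R - m \<in> pos_hull M"
      then obtain d where d: "\<Sum>(M - {m}) + \<epsilon> *\<^sub>R - m = (\<Sum>s\<in>M. d s *\<^sub>R s)" "\<forall>s\<in>M. 0 \<le> d s"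
        unfolding pos_hull_def by auto
      have "(\<Sum>s\<in>M. (if s = m then - \<epsilon> else 1) *\<^sub>R s) = (- \<epsilon>) *\<^sub>R m + (\<Sum>s\<in>M - {m}. (if s = m then - \<epsilon> else 1) *\<^sub>R s)"
        using fM m by (simp add: sum.remove)
      also have "(\<Sum>s\<in>M - {m}. (if s = m then - \<epsilon> else 1) *\<^sub>R s) = \<Sum>(M - {m})"
        by (rule sum.cong) auto
      finally have "(\<Sum>s\<in>M. (if s = m then - \<epsilon> else 1) *\<^sub>R s) = (\<Sum>s\<in>M. d s *\<^sub>R s)"
        using d(1) by (simp add: add.commute)
      from coord_unique[OF iM subset_refl subset_refl this m] have "- \<epsilon> = d m" using m by simp
      then show False using ep d(2) m by force
    qed
  qed
  then obtain T where T: "T \<in> \<Delta>" "M - {m} \<subseteq> T" "\<not> T \<subseteq> M" by blast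
  obtain M2 where M2: "maximal_cone \<Delta> M2" "T \<subseteq> M2" using exists_maximal[OF fan T(1)] by blast
  have "m \<notin> M2"
  proof
    assume "m \<in> M2"
    then have "M \<subseteq> M2" using T(2) M2(2) by blast
    then have "M2 = M" using M M2(1) unfolding maximal_cone_def by blast
    then show False using T(3) M2(2) by blast
  qed
  then show ?thesis using M2 T(2) by blast
qed

lemma inner_integral:
  fixes M :: "(real^'n) set"
  assumes "lattice_basis M" "lattice_vec b" "\<And>m. m \<in> M \<Longrightarrow> inner u m \<in> \<int>"
  shows "inner u b \<in> \<int>"
proof -
  obtain c where c: "\<forall>m\<in>M. c m \<in> \<int>" "b = (\<Sum>m\<in>M. c m *\<^sub>R m)"
    using assms(1,2) unfolding lattice_basis_def by blast
  have "inner u b = (\<Sum>m\<in>M. c m * inner u m)" unfolding c(2) by (simp add: inner_sum_right)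
  also have "\<dots> \<in> \<int>" using c(1) assms(3) by (intro Ints_sum Ints_mult) auto
  finally show ?thesis .
qed

lemma Ints_less_one: "(x::real) \<in> \<int> \<Longrightarrow> x < 1 \<Longrightarrow> x \<le> 0"
  by (elim Ints_cases) simp

locale setting =
  fixes \<Delta> :: "(real^'n) set set" and P :: "(real^'n) set" and rho :: "real^'n"
  assumes fan: "nonsingular_fan \<Delta>" and comp: "complete_fan \<Delta>"
    and FS: "all_toric_subvarieties_fano \<Delta>"
    and prim: "primitive_collection \<Delta> P"
    and rr: "rho \<in> rays \<Delta>" and sP: "\<Sum>P = rho"
begin

lemma P_notin: "P \<notin> \<Delta>" and P_proper: "Q \<subset> P \<Longrightarrow> Q \<in> \<Delta>" and P_rays: "P \<subseteq> rays \<Delta>"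
  using prim unfolding primitive_collection_def by auto

lemma not_sub_P: "S \<in> \<Delta> \<Longrightarrow> \<not> P \<subseteq> S"
  using fan_face[OF fan] P_notin by blast

lemma ray_cone: "r \<in> rays \<Delta> \<Longrightarrow> {r} \<in> \<Delta>"
  unfolding rays_def by auto

lemma ray_lattice: assumes "r \<in> rays \<Delta>" shows "lattice_vec r"
proof -
  obtain B where "lattice_basis B" "{r} \<subseteq> B" using fan_basis[OF fan ray_cone[OF assms]] by blast
  then show ?thesis unfolding lattice_basis_def by auto
qed

lemma P_ne: "P \<noteq> {}" using P_notin fan_empty[OF fan] by auto

lemma P_fin: "finite P"
proof -
  obtain p where p: "p \<in> P" using P_ne by auto
  have "P - {p} \<in> \<Delta>" using p by (intro P_proper) auto
  then have "finite (P - {p})" using cone_fin_indep[OF fan] by blast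
  then show ?thesis by simp
qed

lemma rho_notin_P: "rho \<notin> P"
proof
  assume r: "rho \<in> P"
  have "P \<noteq> {rho}" using P_notin ray_cone[OF rr] by auto
  then obtain q where q: "q \<in> P" "q \<noteq> rho" using P_ne by blast
  have D: "P - {rho} \<in> \<Delta>" using r by (intro P_proper) auto
  have ind: "independent (P - {rho})" using cone_fin_indep[OF fan D] by blast
  have "\<Sum>P = rho + \<Sum>(P - {rho})" using P_fin r by (simp add: sum.remove)
  then have "(\<Sum>v\<in>P - {rho}. 1 *\<^sub>R v) = 0" using sP by simp
  then show False using ind q unfolding independent_explicit
    by (elim conjE allE[of _ "\<lambda>_. 1"]) auto
qed

lemma claim1:
  assumes M: "maximal_cone \<Delta> M" and rM: "rho \<in> M"
  shows "\<exists>q. P - M = {q}"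
proof -
  have MD: "M \<in> \<Delta>" using M unfolding maximal_cone_def by auto
  have LM: "lattice_basis M" by (rule maximal_lattice_basis[OF fan comp M])
  have ne: "P - M \<noteq> {}" using not_sub_P[OF MD] by auto
  have uniq: "b1 = b2" if b: "b1 \<in> P - M" "b2 \<in> P - M" for b1 b2
  proof (rule ccontr)
    assume neq: "b1 \<noteq> b2"
    define A where "A = P \<inter> M"
    have AD: "A \<in> \<Delta>" unfolding A_def using fan_face[OF fan MD] by blast
    have "fano_orbit_closure \<Delta> A" using FS AD unfolding all_toric_subvarieties_fano_def by blast
    then obtain u where u0: "\<forall>r\<in>A. inner u r = 0" and u1: "\<forall>r\<in>M - A. inner u r = 1"
      and ul: "\<forall>r. r \<in> rays \<Delta> \<and> r \<notin> M \<and> insert r A \<in> \<Delta> \<longrightarrow> inner u r < 1"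
      unfolding fano_orbit_closure_def using M by (auto simp: A_def)
    have intM: "inner u m \<in> \<int>" if "m \<in> M" for m
      using u0 u1 that by (cases "m \<in> A") auto
    have nonpos: "inner u b \<le> 0" if bb: "b \<in> P - M" for b
    proof -
      obtain b' where b': "b' \<in> P - M" "b' \<noteq> b" using b neq by metis
      have "insert b A \<subset> P" using bb b' unfolding A_def by auto
      then have "insert b A \<in> \<Delta>" by (rule P_proper)
      moreover have "b \<in> rays \<Delta>" using bb P_rays by auto
      ultimately have "inner u b < 1" using ul bb by auto
      moreover have "inner u b \<in> \<int>" using inner_integral[OF LM ray_lattice intM] \<open>b \<in> rays \<Delta>\<close> by blast
      ultimately show ?thesis by (rule Ints_less_one[rotated])
    qed
    have "inner u rho = (\<Sum>p\<in>P. inner u p)" using sP by (auto simp: inner_sum_right)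
    also have "\<dots> = (\<Sum>p\<in>P \<inter> M. inner u p) + (\<Sum>p\<in>P - M. inner u p)"
      using P_fin by (rule sum.Int_Diff)
    also have "(\<Sum>p\<in>P \<inter> M. inner u p) = 0" using u0 unfolding A_def by simp
    also have "(\<Sum>p\<in>P - M. inner u p) \<le> 0" using nonpos by (rule sum_nonpos)
    finally have "inner u rho \<le> 0" by simp
    moreover have "inner u rho = 1" using u1 rM rho_notin_P unfolding A_def by auto
    ultimately show False by simp
  qed
  from ne uniq show ?thesis by blast
qed

lemma claim2:
  assumes M: "maximal_cone \<Delta> M" and rM: "rho \<in> M" and q: "P - M = {q}" and p: "p \<in> P" "p \<noteq> q"
  shows "insert q (M - {p}) \<in> \<Delta>"
proof -
  have pM: "p \<in> M" using q p by auto
  obtain M2 where M2: "maximal_cone \<Delta> M2" "M - {p} \<subseteq> M2" "p \<notin> M2"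
    using flip_exists[OF fan comp M pM] by blast
  have "rho \<noteq> p" using rho_notin_P p by auto
  then have "rho \<in> M2" using rM M2(2) by auto
  then obtain q' where q': "P - M2 = {q'}" using claim1[OF M2(1)] by blast
  have "q' = p" using q' p M2(3) by auto
  moreover have "q \<in> P" "q \<noteq> p" using q p by auto
  ultimately have "q \<in> M2" using q' by auto
  then have "insert q (M - {p}) \<subseteq> M2" using M2(2) by auto
  moreover have "M2 \<in> \<Delta>" using M2(1) unfolding maximal_cone_def by auto
  ultimately show ?thesis using fan_face[OF fan] by metis
qed

lemma key:
  assumes S: "S \<in> \<Delta>" and rS: "rho \<in> S" and p: "p \<in> P"
  shows "(S \<union> P) - {p} \<in> \<Delta>"
proof -
  obtain M where M: "maximal_cone \<Delta> M" "S \<subseteq> M" using exists_maximal[OF fan S] by blast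
  have MD: "M \<in> \<Delta>" using M(1) unfolding maximal_cone_def by auto
  obtain q where q: "P - M = {q}" using claim1[OF M(1)] rS M(2) by blast
  show ?thesis
  proof (cases "p = q")
    case True
    have "(S \<union> P) - {p} \<subseteq> M" using q M(2) True by blast
    then show ?thesis by (rule fan_face[OF fan MD])
  next
    case False
    have rM: "rho \<in> M" using rS M(2) by blast
    have C: "insert q (M - {p}) \<in> \<Delta>" by (rule claim2[OF M(1) rM q p False])
    have "(S \<union> P) - {p} \<subseteq> insert q (M - {p})" using q M(2) by blast
    then show ?thesis by (rule fan_face[OF fan C])
  qed
qed

lemma star_cover:
  assumes fS: "finite S" and PS: "P \<subseteq> S" and rS: "rho \<notin> S" and x: "x \<in> pos_hull S"
  shows "\<exists>p\<in>P. x \<in> pos_hull (insert rho (S - {p}))"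
proof -
  obtain c where c: "x = (\<Sum>s\<in>S. c s *\<^sub>R s)" "\<forall>s\<in>S. 0 \<le> c s"
    using x unfolding pos_hull_def by auto
  define m where "m = Min (c ` P)"
  have "m \<in> c ` P" unfolding m_def using P_fin P_ne by (intro Min_in) auto
  then obtain p0 where p0: "p0 \<in> P" "c p0 = m" by auto
  have mle: "m \<le> c p" if "p \<in> P" for p unfolding m_def using P_fin that by (intro Min_le) auto
  have m0: "0 \<le> m" using p0 PS c(2) by auto
  define c' where "c' s = c s - (if s \<in> P then m else 0)" for s
  have c'0: "0 \<le> c' s" if "s \<in> S" for s using mle c(2) that unfolding c'_def by auto
  have c'p0: "c' p0 = 0" using p0 unfolding c'_def by simp
  have "x = (\<Sum>s\<in>S. c' s *\<^sub>R s + (if s \<in> P then m else 0) *\<^sub>R s)"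
    unfolding c(1) c'_def by (rule sum.cong) (auto simp: scaleR_diff_left)
  also have "\<dots> = (\<Sum>s\<in>S. c' s *\<^sub>R s) + (\<Sum>s\<in>S. (if s \<in> P then m else 0) *\<^sub>R s)"
    by (rule sum.distrib)
  also have "(\<Sum>s\<in>S. (if s \<in> P then m else 0) *\<^sub>R s) = (\<Sum>s\<in>P. m *\<^sub>R s)"
    using sum_extend[OF fS PS, of "\<lambda>_. m"] by simp
  also have "\<dots> = m *\<^sub>R rho" unfolding sP[symmetric] by (simp add: scaleR_sum_right)
  also have "(\<Sum>s\<in>S. c' s *\<^sub>R s) = (\<Sum>s\<in>S - {p0}. c' s *\<^sub>R s)"
    using sum.remove[OF fS, of p0 "\<lambda>s. c' s *\<^sub>R s"] p0 PS c'p0 by auto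
  finally have xe: "x = (\<Sum>s\<in>S - {p0}. c' s *\<^sub>R s) + m *\<^sub>R rho" .
  define d where "d s = (if s = rho then m else c' s)" for s
  have "(\<Sum>s\<in>insert rho (S - {p0}). d s *\<^sub>R s) = m *\<^sub>R rho + (\<Sum>s\<in>S - {p0}. d s *\<^sub>R s)"
    using fS rS by (simp add: d_def)
  also have "(\<Sum>s\<in>S - {p0}. d s *\<^sub>R s) = (\<Sum>s\<in>S - {p0}. c' s *\<^sub>R s)"
    using rS by (intro sum.cong) (auto simp: d_def)
  finally have "x = (\<Sum>s\<in>insert rho (S - {p0}). d s *\<^sub>R s)" using xe by (simp add: add.commute)
  moreover have "\<forall>s\<in>insert rho (S - {p0}). 0 \<le> d s" using m0 c'0 rS by (auto simp: d_def)
  ultimately show ?thesis using p0(1) unfolding pos_hull_def by blast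
qed

definition D' where
  "D' = {S. rho \<notin> S \<and> (S \<in> \<Delta> \<or> (P \<subseteq> S \<and> (\<forall>p\<in>P. insert rho (S - {p}) \<in> \<Delta>)))}"

lemma D'_finite_cone: assumes "S \<in> D'" shows "finite S"
proof (cases "S \<in> \<Delta>")
  case True then show ?thesis using cone_fin_indep(1)[OF fan True] by simp
next
  case False
  then have h: "\<forall>p\<in>P. insert rho (S - {p}) \<in> \<Delta>" using assms unfolding D'_def by auto
  obtain p where "p \<in> P" using P_ne by auto
  then have "insert rho (S - {p}) \<in> \<Delta>" using h by blast
  then have "finite (insert rho (S - {p}))" by (rule cone_fin_indep(1)[OF fan])
  then show ?thesis by simp
qed

lemma cover:
  assumes S: "S \<in> D'" and x: "x \<in> pos_hull S"
  shows "\<exists>C\<in>\<Delta>. x \<in> pos_hull C \<and> C \<subseteq> insert rho S \<and> (rho \<in> C \<longrightarrow> P \<subseteq> S)"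
proof (cases "S \<in> \<Delta>")
  case True
  then show ?thesis using x S unfolding D'_def by auto
next
  case False
  then have h: "rho \<notin> S" "P \<subseteq> S" "\<forall>p\<in>P. insert rho (S - {p}) \<in> \<Delta>" using S unfolding D'_def by auto
  obtain p where "p \<in> P" "x \<in> pos_hull (insert rho (S - {p}))"
    using star_cover[OF D'_finite_cone[OF S] h(2,1) x] by blast
  then show ?thesis using h by blast
qed

lemma D'_inter:
  assumes S: "S \<in> D'" and T: "T \<in> D'"
  shows "pos_hull S \<inter> pos_hull T = pos_hull (S \<inter> T)"
proof
  have fS: "finite S" and fT: "finite T" using D'_finite_cone S T by auto
  show "pos_hull (S \<inter> T) \<subseteq> pos_hull S \<inter> pos_hull T"
    using pos_hull_mono[OF fS, of "S \<inter> T"] pos_hull_mono[OF fT, of "S \<inter> T"] by auto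
  show "pos_hull S \<inter> pos_hull T \<subseteq> pos_hull (S \<inter> T)"
  proof
    fix x assume xST: "x \<in> pos_hull S \<inter> pos_hull T"
    obtain C where C: "C \<in> \<Delta>" "x \<in> pos_hull C" "C \<subseteq> insert rho S" "rho \<in> C \<longrightarrow> P \<subseteq> S"
      using cover[OF S] xST by blast
    obtain D where D: "D \<in> \<Delta>" "x \<in> pos_hull D" "D \<subseteq> insert rho T" "rho \<in> D \<longrightarrow> P \<subseteq> T"
      using cover[OF T] xST by blast
    have xE: "x \<in> pos_hull (C \<inter> D)" using fan_inter[OF fan C(1) D(1)] C(2) D(2) by auto
    have fST: "finite (S \<inter> T)" using fS by simp
    show "x \<in> pos_hull (S \<inter> T)"
    proof (cases "rho \<in> C \<inter> D")
      case True
      then have "P \<subseteq> S \<inter> T" using C(4) D(4) by auto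
      then have "rho \<in> pos_hull (S \<inter> T)" using sum_in_pos_hull[OF fST, of P] sP by simp
      then have "pos_hull (insert rho (S \<inter> T)) \<subseteq> pos_hull (S \<inter> T)"
        by (rule pos_hull_insert_absorb[OF fST])
      moreover have "pos_hull (C \<inter> D) \<subseteq> pos_hull (insert rho (S \<inter> T))"
        using C(3) D(3) fST by (intro pos_hull_mono) auto
      ultimately show ?thesis using xE by auto
    next
      case False
      then have "C \<inter> D \<subseteq> S \<inter> T" using C(3) D(3) by auto
      then show ?thesis using xE pos_hull_mono[OF fST] by auto
    qed
  qed
qed

lemma D'_face:
  assumes S: "S \<in> D'" and TS: "T \<subseteq> S" shows "T \<in> D'"
proof -
  have rT: "rho \<notin> T" using S TS unfolding D'_def by auto
  show ?thesis
  proof (cases "S \<in> \<Delta>")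
    case True
    then have "T \<in> \<Delta>" using fan_face[OF fan True TS] by simp
    then show ?thesis using rT unfolding D'_def by simp
  next
    case False
    then have h: "P \<subseteq> S" "\<forall>p\<in>P. insert rho (S - {p}) \<in> \<Delta>" using S unfolding D'_def by auto
    show ?thesis
    proof (cases "P \<subseteq> T")
      case True
      have "\<forall>p\<in>P. insert rho (T - {p}) \<in> \<Delta>"
      proof
        fix p assume p: "p \<in> P"
        have "insert rho (T - {p}) \<subseteq> insert rho (S - {p})" using TS by blast
        then show "insert rho (T - {p}) \<in> \<Delta>" by (rule fan_face[OF fan h(2)[rule_format, OF p]])
      qed
      then show ?thesis using rT True unfolding D'_def by simp
    next
      case False
      then obtain q where q: "q \<in> P" "q \<notin> T" by blast
      have "T \<subseteq> insert rho (S - {q})" using TS q by blast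
      then have "T \<in> \<Delta>" by (rule fan_face[OF fan h(2)[rule_format, OF q(1)]])
      then show ?thesis using rT unfolding D'_def by simp
    qed
  qed
qed

lemma D'_basis:
  assumes S: "S \<in> D'" shows "\<exists>B. lattice_basis B \<and> S \<subseteq> B"
proof (cases "S \<in> \<Delta>")
  case True then show ?thesis by (rule fan_basis[OF fan])
next
  case False
  then have h: "rho \<notin> S" "P \<subseteq> S" "\<forall>p\<in>P. insert rho (S - {p}) \<in> \<Delta>" using S unfolding D'_def by auto
  obtain p where p: "p \<in> P" using P_ne by blast
  have CD: "insert rho (S - {p}) \<in> \<Delta>" using h(3) p by blast
  obtain M where M: "maximal_cone \<Delta> M" "insert rho (S - {p}) \<subseteq> M" using exists_maximal[OF fan CD] by blast
  have MD: "M \<in> \<Delta>" using M(1) unfolding maximal_cone_def by auto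
  have LM: "lattice_basis M" by (rule maximal_lattice_basis[OF fan comp M(1)])
  have fM: "finite M" using LM unfolding lattice_basis_def by simp
  have rM: "rho \<in> M" using M(2) by blast
  define Q where "Q = P - {p}"
  have QM: "Q \<subseteq> M - {rho}" using M(2) h(2) rho_notin_P unfolding Q_def by blast
  have pM: "p \<notin> M"
  proof
    assume "p \<in> M"
    then have "P \<subseteq> M" using QM unfolding Q_def by blast
    then show False using not_sub_P[OF MD] by blast
  qed
  have rhoQ: "rho = p + \<Sum>Q" using sP P_fin p unfolding Q_def by (simp add: sum.remove)
  define B' where "B' = insert p (M - {rho})"
  have SB: "S \<subseteq> B'" using M(2) h(1) unfolding B'_def by blast
  have "lattice_basis B'"
    unfolding lattice_basis_def
  proof (intro conjI ballI allI impI)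
    show fB: "finite B'" using fM unfolding B'_def by simp
    show "card B' = CARD('n)" unfolding B'_def using fM pM rM LM
      by (simp add: card_insert_if lattice_basis_def)
  next
    fix b assume "b \<in> B'"
    then show "lattice_vec b"
    proof (cases "b = p")
      case True then show ?thesis using p P_rays ray_lattice by blast
    next
      case False then show ?thesis using \<open>b \<in> B'\<close> LM unfolding B'_def lattice_basis_def by auto
    qed
  next
    fix v :: "real^'n" assume "lattice_vec v"
    then obtain c where c: "\<forall>b\<in>M. c b \<in> \<int>" "v = (\<Sum>b\<in>M. c b *\<^sub>R b)"
      using LM unfolding lattice_basis_def by blast
    define e where "e b = (if b = p then c rho else c b + (if b \<in> Q then c rho else 0))" for b
    have fM': "finite (M - {rho})" using fM by simp
    have "v = c rho *\<^sub>R rho + (\<Sum>b\<in>M - {rho}. c b *\<^sub>R b)"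
      unfolding c(2) using fM rM by (simp add: sum.remove)
    also have "c rho *\<^sub>R rho = c rho *\<^sub>R p + (\<Sum>b\<in>Q. c rho *\<^sub>R b)"
      unfolding rhoQ by (simp add: scaleR_add_right scaleR_sum_right)
    also have "(\<Sum>b\<in>Q. c rho *\<^sub>R b) = (\<Sum>b\<in>M - {rho}. (if b \<in> Q then c rho else 0) *\<^sub>R b)"
      by (rule sum_extend[OF fM' QM])
    finally have "v = c rho *\<^sub>R p + ((\<Sum>b\<in>M - {rho}. (if b \<in> Q then c rho else 0) *\<^sub>R b) + (\<Sum>b\<in>M - {rho}. c b *\<^sub>R b))"
      by (simp add: add.assoc)
    also have "(\<Sum>b\<in>M - {rho}. (if b \<in> Q then c rho else 0) *\<^sub>R b) + (\<Sum>b\<in>M - {rho}. c b *\<^sub>R b)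
       = (\<Sum>b\<in>M - {rho}. e b *\<^sub>R b)"
      unfolding sum.distrib[symmetric] using pM
      by (intro sum.cong) (auto simp: e_def scaleR_add_left)
    also have "c rho *\<^sub>R p + (\<Sum>b\<in>M - {rho}. e b *\<^sub>R b) = (\<Sum>b\<in>B'. e b *\<^sub>R b)"
      unfolding B'_def using fM' pM by (simp add: e_def)
    finally have ve: "v = (\<Sum>b\<in>B'. e b *\<^sub>R b)" .
    have "\<forall>b\<in>B'. e b \<in> \<int>"
      using c(1) rM unfolding B'_def e_def by auto
    then show "\<exists>c. (\<forall>b\<in>B'. c b \<in> \<int>) \<and> v = (\<Sum>b\<in>B'. c b *\<^sub>R b)" using ve by blast
  qed
  then show ?thesis using SB by blast
qed

lemma D'_finite: "finite D'"
proof -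
  have fU: "finite (\<Union>\<Delta> \<union> P)"
    using fan_finite[OF fan] cone_fin_indep(1)[OF fan] P_fin by auto
  have "D' \<subseteq> Pow (\<Union>\<Delta> \<union> P)"
  proof
    fix S assume S: "S \<in> D'"
    show "S \<in> Pow (\<Union>\<Delta> \<union> P)"
    proof (cases "S \<in> \<Delta>")
      case True then show ?thesis by blast
    next
      case False
      then have h: "\<forall>p\<in>P. insert rho (S - {p}) \<in> \<Delta>" using S unfolding D'_def by auto
      obtain p where p: "p \<in> P" using P_ne by blast
      have "insert rho (S - {p}) \<in> \<Delta>" using h p by blast
      then have "S - {p} \<subseteq> \<Union>\<Delta>" by blast
      then show ?thesis using p by blast
    qed
  qed
  then show ?thesis using fU by (simp add: finite_subset)
qed

lemma P_in_D': "P \<in> D'"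
proof -
  have "\<forall>p\<in>P. insert rho (P - {p}) \<in> \<Delta>"
  proof
    fix p assume p: "p \<in> P"
    have "({rho} \<union> P) - {p} \<in> \<Delta>" by (rule key[OF ray_cone[OF rr] _ p]) simp
    moreover have "({rho} \<union> P) - {p} = insert rho (P - {p})" using p rho_notin_P by auto
    ultimately show "insert rho (P - {p}) \<in> \<Delta>" by simp
  qed
  then show ?thesis using rho_notin_P unfolding D'_def by blast
qed

lemma D'_nonsingular: "nonsingular_fan D'"
  unfolding nonsingular_fan_def
proof (intro conjI ballI allI impI)
  show "finite D'" by (rule D'_finite)
  show "{} \<in> D'" using fan_empty[OF fan] unfolding D'_def by simp
  show "\<And>S T. S \<in> D' \<Longrightarrow> T \<subseteq> S \<Longrightarrow> T \<in> D'" by (rule D'_face)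
  show "\<And>S. S \<in> D' \<Longrightarrow> \<exists>B. lattice_basis B \<and> S \<subseteq> B" by (rule D'_basis)
  show "\<And>S T. S \<in> D' \<Longrightarrow> T \<in> D' \<Longrightarrow> pos_hull S \<inter> pos_hull T = pos_hull (S \<inter> T)" by (rule D'_inter)
qed

lemma star_eq: "\<Delta> = star_subdivision D' P"
proof
  show "\<Delta> \<subseteq> star_subdivision D' P"
  proof
    fix S assume S: "S \<in> \<Delta>"
    show "S \<in> star_subdivision D' P"
    proof (cases "rho \<in> S")
      case False
      then have "S \<in> D'" using S unfolding D'_def by simp
      then show ?thesis using not_sub_P[OF S] unfolding star_subdivision_def by blast
    next
      case True
      define \<tau> where "\<tau> = S - {rho}"
      have tD: "\<tau> \<in> \<Delta>" using fan_face[OF fan S] unfolding \<tau>_def by blast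
      have t1: "\<tau> \<in> D'" using tD unfolding D'_def \<tau>_def by simp
      have t2: "\<not> P \<subseteq> \<tau>" using not_sub_P[OF tD] .
      have "\<forall>p\<in>P. insert rho ((\<tau> \<union> P) - {p}) \<in> \<Delta>"
      proof
        fix p assume p: "p \<in> P"
        have "insert rho ((\<tau> \<union> P) - {p}) = (S \<union> P) - {p}"
          using True p rho_notin_P unfolding \<tau>_def by auto
        then show "insert rho ((\<tau> \<union> P) - {p}) \<in> \<Delta>" using key[OF S True p] by simp
      qed
      moreover have "rho \<notin> \<tau> \<union> P" using rho_notin_P unfolding \<tau>_def by simp
      ultimately have t3: "\<tau> \<union> P \<in> D'" unfolding D'_def by blast
      have "S = insert (\<Sum>P) \<tau>" using True sP unfolding \<tau>_def by auto
      then show ?thesis using t1 t2 t3 unfolding star_subdivision_def by blast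
    qed
  qed
  show "star_subdivision D' P \<subseteq> \<Delta>"
  proof
    fix S assume "S \<in> star_subdivision D' P"
    then consider (a) "S \<in> D'" "\<not> P \<subseteq> S"
      | (b) \<tau> where "S = insert (\<Sum>P) \<tau>" "\<tau> \<in> D'" "\<not> P \<subseteq> \<tau>" "\<tau> \<union> P \<in> D'"
      unfolding star_subdivision_def by blast
    then show "S \<in> \<Delta>"
    proof cases
      case a then show ?thesis unfolding D'_def by blast
    next
      case b
      obtain q where q: "q \<in> P" "q \<notin> \<tau>" using b(3) by blast
      have "\<tau> \<union> P \<notin> \<Delta>" using not_sub_P by blast
      then have "insert rho ((\<tau> \<union> P) - {q}) \<in> \<Delta>" using b(4) q(1) unfolding D'_def by blast
      moreover have "S \<subseteq> insert rho ((\<tau> \<union> P) - {q})" using b(1) q(2) sP by blast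
      ultimately show ?thesis using fan_face[OF fan] by blast
    qed
  qed
qed

end

theorem proposition3p5:
  fixes \<Delta> :: "(real^'n) set set" and P :: "(real^'n) set" and rho_hat :: "real^'n"
  assumes "nonsingular_fan \<Delta>" and "complete_fan \<Delta>"
    and "fano \<Delta>" and "all_toric_subvarieties_fano \<Delta>"
    and "primitive_collection \<Delta> P"
    and "rho_hat \<in> rays \<Delta>" and "\<Sum>P = rho_hat"
  shows "\<exists>\<Delta>'. nonsingular_fan \<Delta>' \<and> P \<in> \<Delta>' \<and> \<Delta> = star_subdivision \<Delta>' P"
proof -
  interpret setting \<Delta> P rho_hat using assms by unfold_locales
  show ?thesis using D'_nonsingular P_in_D' star_eq by blast
qed

end
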